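(* Let $N\ge 1$, let $A\in\{0,1\}^{N\times N}$ be the symmetric adjacency matrix of an undirected graph (the top layer) and let $L\in\mathbb{R}^{N\times N}$ be the (symmetric) Laplacian matrix of an undirected graph (the bottom layer) on the node set $[N]=\{1,\dots,N\}$. Let $K=\mathrm{diag}(\kappa_1,\dots,\kappa_N)$ with each $\kappa_i\in\{0,1\}$. Let $\mathcal{G}_{\mathfrak{T}}$ be the group of $N\times N$ permutation matrices $P$ with $PA=AP$, let $\mathcal{G}_{\mathfrak{B}}$ be the group of $N\times N$ permutation matrices $P$ with $PL=LP$, and let $$\mathcal{G}=\Big\{\begin{pmatrix}P_{\mathfrak{T}}&0\\0&P_{\mathfrak{B}}\end{pmatrix}: P_{\mathfrak{T}}\in\mathcal{G}_{\mathfrak{T}},\ P_{\mathfrak{B}}\in\mathcal{G}_{\mathfrak{B}},\ P_{\mathfrak{B}}K=KP_{\mathfrak{T}}\Big\}.$$ Let $\{\mathcal{K}_{\mathfrak{T}}^j\}_{j=1}^{k_{\mathfrak{T}}}$ and $\{\mathcal{K}_{\mathfrak{B}}^l\}_{l=1}^{k_{\mathfrak{B}}}$ be the partitions of $[N]$ into orbits of $\mathcal{G}$ acting (through the $P_{\mathfrak{T}}$ block, respectively the $P_{\mathfrak{B}}$ block) on $[N]$. Let $E_{\mathfrak{T}}\in\mathbb{R}^{N\times k_{\mathfrak{T}}}$ be the matrix with $(E_{\mathfrak{T}})_{ij}=1$ if $i\in\mathcal{K}_{\mathfrak{T}}^j$ and $0$ otherwise, and similarly $E_{\mathfrak{B}}\in\mathbb{R}^{N\times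 k_{\mathfrak{B}}}$; let $\Pi_{\mathfrak{T}}=E_{\mathfrak{T}}(E_{\mathfrak{T}}^*E_{\mathfrak{T}})^{-1}E_{\mathfrak{T}}^*$ and $\Pi_{\mathfrak{B}}=E_{\mathfrak{B}}(E_{\mathfrak{B}}^*E_{\mathfrak{B}})^{-1}E_{\mathfrak{B}}^*$ be the orthogonal projections onto the column spaces of $E_{\mathfrak{T}}$ and $E_{\mathfrak{B}}$. Let $\{v_{\mathfrak{T}}^i\}_{i\in[N]}$ and $\{v_{\mathfrak{B}}^i\}_{i\in[N]}$ be orthonormal eigenbases of $\Pi_{\mathfrak{T}}$ and $\Pi_{\mathfrak{B}}$, ordered so that $v_{\mathfrak{T}}^1,\dots,v_{\mathfrak{T}}^{k_{\mathfrak{T}}}$ span the column space of $E_{\mathfrak{T}}$ and $v_{\mathfrak{B}}^1,\dots,v_{\mathfrak{B}}^{k_{\mathfrak{B}}}$ span the column space of $E_{\mathfrak{B}}$ (the remaining vectors spanning the respective kernels), and set $T_{\mathfrak{T}}=[v_{\mathfrak{T}}^1,\dots,v_{\mathfrak{T}}^N]$, $T_{\mathfrak{B}}=[v_{\mathfrak{B}}^1,\dots,v_{\mathfrak{B}}^N]$. Then $B=T_{\mathfrak{T}}^*AT_{\mathfrak{T}}$ and $M=T_{\mathfrak{B}}^*LT_{\mathfrak{B}}$ are block-diagonal, $$B=\begin{pmatrix}B^{\parallel}&0\\0&B^{\perp}\end{pmatrix},\qquad M=\begin{pmatrix}M^{\parallel}&0\\0&M^{\perp}\end{pmatrix},$$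 with $B^{\parallel}\in\mathbb{R}^{k_{\mathfrak{T}}\times k_{\mathfrak{T}}}$, $B^{\perp}\in\mathbb{R}^{(N-k_{\mathfrak{T}})\times(N-k_{\mathfrak{T}})}$, $M^{\parallel}\in\mathbb{R}^{k_{\mathfrak{B}}\times k_{\mathfrak{B}}}$, $M^{\perp}\in\mathbb{R}^{(N-k_{\mathfrak{B}})\times(N-k_{\mathfrak{B}})}$.
   Context: This concerns a duplex network of two layers on the same node set $[N]$: a top layer with adjacency matrix $A$ and a bottom layer with Laplacian $L$, with directed one-to-one inter-layer links from top node $i$ to bottom node $i$ present exactly when $\kappa_i=1$. The sets $\mathcal{K}_{\mathfrak{T}}^j$, $\mathcal{K}_{\mathfrak{B}}^l$ are called the clusters of the top and bottom layer. $E^*$ denotes the transpose. *)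

theory Defs
  imports "Jordan_Normal_Form.Gauss_Jordan_Elimination"
begin

text \<open>Matrices are Jordan_Normal_Form matrices over the reals, indices 0..N-1.\<close>

definition is_perm_mat :: "nat \<Rightarrow> real mat \<Rightarrow> bool" where
  "is_perm_mat N P \<longleftrightarrow> P \<in> carrier_mat N N \<and>
     (\<forall>i<N. \<forall>j<N. P $$ (i,j) = 0 \<or> P $$ (i,j) = 1) \<and>
     (\<forall>i<N. \<exists>!j. j < N \<and> P $$ (i,j) = 1) \<and>
     (\<forall>j<N. \<exists>!i. i < N \<and> P $$ (i,j) = 1)"

definition laplacian :: "nat \<Rightarrow> real mat \<Rightarrow> real mat" where
  "laplacian N W = mat N N (\<lambda>(i,j). if i = j then (\<Sum>k<N. W $$ (i,k)) - W $$ (i,i) else - W $$ (i,j))"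

definition diag_K :: "nat \<Rightarrow> (nat \<Rightarrow> real) \<Rightarrow> real mat" where
  "diag_K N \<kappa> = mat N N (\<lambda>(i,j). if i = j then \<kappa> i else 0)"

text \<open>The group G of pairs (P_T, P_B) (the block-diagonal matrices diag(P_T,P_B)).\<close>
definition sym_group :: "nat \<Rightarrow> real mat \<Rightarrow> real mat \<Rightarrow> real mat \<Rightarrow> (real mat \<times> real mat) set" where
  "sym_group N A L K = {(PT, PB). is_perm_mat N PT \<and> PT * A = A * PT \<and>
        is_perm_mat N PB \<and> PB * L = L * PB \<and> PB * K = K * PT}"

text \<open>Orbit of node i under the action of G through the top (resp. bottom) block:
  P e_i = e_j iff P(j,i) = 1.\<close>
definition orbit_top :: "nat \<Rightarrow> (real mat \<times> real mat) set \<Rightarrow> nat \<Rightarrow> nat set" where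
  "orbit_top N G i = {j. j < N \<and> (\<exists>(PT,PB)\<in>G. PT $$ (j,i) = 1)}"

definition orbit_bot :: "nat \<Rightarrow> (real mat \<times> real mat) set \<Rightarrow> nat \<Rightarrow> nat set" where
  "orbit_bot N G i = {j. j < N \<and> (\<exists>(PT,PB)\<in>G. PB $$ (j,i) = 1)}"

definition clusters_top :: "nat \<Rightarrow> (real mat \<times> real mat) set \<Rightarrow> nat set set" where
  "clusters_top N G = orbit_top N G ` {..<N}"

definition clusters_bot :: "nat \<Rightarrow> (real mat \<times> real mat) set \<Rightarrow> nat set set" where
  "clusters_bot N G = orbit_bot N G ` {..<N}"

definition cluster_mat :: "nat \<Rightarrow> nat \<Rightarrow> (nat \<Rightarrow> nat set) \<Rightarrow> real mat" where
  "cluster_mat N k c = mat N k (\<lambda>(i,j). if i \<in> c j then 1 else 0)"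

definition proj_mat :: "real mat \<Rightarrow> real mat" where
  "proj_mat E = E * the (mat_inverse (E\<^sup>T * E)) * E\<^sup>T"

definition col_space :: "real mat \<Rightarrow> real vec set" where
  "col_space M = {M *\<^sub>v c | c. c \<in> carrier_vec (dim_col M)}"

definition ker_space :: "real mat \<Rightarrow> real vec set" where
  "ker_space M = {v. v \<in> carrier_vec (dim_col M) \<and> M *\<^sub>v v = 0\<^sub>v (dim_row M)}"

definition cols_first :: "nat \<Rightarrow> real mat \<Rightarrow> real mat" where
  "cols_first k T = mat (dim_row T) k (\<lambda>(i,j). T $$ (i,j))"

definition cols_last :: "nat \<Rightarrow> real mat \<Rightarrow> real mat" where
  "cols_last k T = mat (dim_row T) (dim_col T - k) (\<lambda>(i,j). T $$ (i, j + k))"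

definition ordered_eigenbasis :: "nat \<Rightarrow> nat \<Rightarrow> real mat \<Rightarrow> real mat \<Rightarrow> real mat \<Rightarrow> bool" where
  "ordered_eigenbasis N k E Pr T \<longleftrightarrow> T \<in> carrier_mat N N \<and> T\<^sup>T * T = 1\<^sub>m N \<and>
     (\<forall>i<N. \<exists>c. Pr *\<^sub>v col T i = c \<cdot>\<^sub>v col T i) \<and>
     col_space (cols_first k T) = col_space E \<and>
     col_space (cols_last k T) = ker_space Pr"

definition block_diag_split :: "nat \<Rightarrow> nat \<Rightarrow> real mat \<Rightarrow> bool" where
  "block_diag_split N k B \<longleftrightarrow> (\<exists>B1 B2. B1 \<in> carrier_mat k k \<and> B2 \<in> carrier_mat (N-k) (N-k) \<and>
     B = four_block_mat B1 (0\<^sub>m k (N-k)) (0\<^sub>m (N-k) k) B2)"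

end

theory Submission
  imports Defs
begin


lemma mat_mult_entry:
  assumes "A \<in> carrier_mat n m" "B \<in> carrier_mat m p" "i < n" "j < p"
  shows "(A * B) $$ (i,j) = (\<Sum>l<m. A $$ (i,l) * B $$ (l,j))"
  using assms by (simp add: scalar_prod_def atLeast0LessThan)

lemma mat_vec_entry:
  assumes "A \<in> carrier_mat n m" "v \<in> carrier_vec m" "i < n"
  shows "(A *\<^sub>v v) $ i = (\<Sum>l<m. A $$ (i,l) * v $ l)"
  using assms by (simp add: scalar_prod_def atLeast0LessThan)

lemma perm_01: "is_perm_mat N P \<Longrightarrow> i < N \<Longrightarrow> j < N \<Longrightarrow> P $$ (i,j) = 0 \<or> P $$ (i,j) = 1"
  unfolding is_perm_mat_def by simp
lemma perm_carrier: "is_perm_mat N P \<Longrightarrow> P \<in> carrier_mat N N"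
  unfolding is_perm_mat_def by simp
lemma perm_row1: "is_perm_mat N P \<Longrightarrow> i < N \<Longrightarrow> \<exists>!j. j < N \<and> P $$ (i,j) = 1"
  unfolding is_perm_mat_def by simp
lemma perm_col1: "is_perm_mat N P \<Longrightarrow> j < N \<Longrightarrow> \<exists>!i. i < N \<and> P $$ (i,j) = 1"
  unfolding is_perm_mat_def by simp
lemma ex1_uniq: "\<exists>!x. Q x \<Longrightarrow> Q a \<Longrightarrow> Q b \<Longrightarrow> a = b"
  by (erule ex1E) blast
lemma perm_row_unique: "is_perm_mat N P \<Longrightarrow> i < N \<Longrightarrow> a < N \<Longrightarrow> b < N \<Longrightarrow>
   P $$ (i,a) = 1 \<Longrightarrow> P $$ (i,b) = 1 \<Longrightarrow> a = b"
  using ex1_uniq[OF perm_row1, of N P i a b] by simp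
lemma perm_col_unique: "is_perm_mat N P \<Longrightarrow> j < N \<Longrightarrow> a < N \<Longrightarrow> b < N \<Longrightarrow>
   P $$ (a,j) = 1 \<Longrightarrow> P $$ (b,j) = 1 \<Longrightarrow> a = b"
  using ex1_uniq[OF perm_col1, of N P j a b] by simp
lemma perm_row_ex: "is_perm_mat N P \<Longrightarrow> i < N \<Longrightarrow> \<exists>a<N. P $$ (i,a) = 1"
  using ex1_implies_ex[OF perm_row1, of N P i] by simp
lemma perm_col_ex: "is_perm_mat N P \<Longrightarrow> j < N \<Longrightarrow> \<exists>a<N. P $$ (a,j) = 1"
  using ex1_implies_ex[OF perm_col1, of N P j] by simp

lemma perm_row_sum:
  assumes "is_perm_mat N P" "i < N" "a < N" "P $$ (i,a) = 1"
  shows "(\<Sum>m<N. P $$ (i,m) * x m) = x a"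
proof -
  have "(\<Sum>m<N. P $$ (i,m) * x m) = (\<Sum>m<N. if m = a then x a else 0)"
  proof (rule sum.cong)
    fix m assume "m \<in> {..<N}"
    then show "P $$ (i,m) * x m = (if m = a then x a else 0)"
    proof (cases "m = a")
      case False
      have "m < N" using \<open>m \<in> {..<N}\<close> by simp
      then have "P $$ (i,m) \<noteq> 1" using perm_row_unique[OF assms(1) assms(2) assms(3), of m] assms(4) False by auto
      then have "P $$ (i,m) = 0" using perm_01[OF assms(1) assms(2) \<open>m < N\<close>] by simp
      then show ?thesis using False by simp
    qed (use assms in simp)
  qed simp
  also have "\<dots> = x a" using assms(3) by simp
  finally show ?thesis .
qed

lemma perm_col_sum:
  assumes "is_perm_mat N P" "j < N" "b < N" "P $$ (b,j) = 1"
  shows "(\<Sum>m<N. x m * P $$ (m,j)) = x b"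
proof -
  have "(\<Sum>m<N. x m * P $$ (m,j)) = (\<Sum>m<N. if m = b then x b else 0)"
  proof (rule sum.cong)
    fix m assume "m \<in> {..<N}"
    then show "x m * P $$ (m,j) = (if m = b then x b else 0)"
    proof (cases "m = b")
      case False
      have "m < N" using \<open>m \<in> {..<N}\<close> by simp
      then have "P $$ (m,j) \<noteq> 1" using perm_col_unique[OF assms(1) assms(2) assms(3), of m] assms(4) False by auto
      then have "P $$ (m,j) = 0" using perm_01[OF assms(1) \<open>m < N\<close> assms(2)] by simp
      then show ?thesis using False by simp
    qed (use assms in simp)
  qed simp
  also have "\<dots> = x b" using assms(3) by simp
  finally show ?thesis .
qed

lemma perm_transpose: assumes "is_perm_mat N P" shows "is_perm_mat N (P\<^sup>T)"
proof -
  have c: "P \<in> carrier_mat N N" using perm_carrier[OF assms] .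
  have e: "P\<^sup>T $$ (i,j) = P $$ (j,i)" if "i < N" "j < N" for i j using c that by auto
  have e1: "(j < N \<and> P\<^sup>T $$ (i,j) = 1) \<longleftrightarrow> (j < N \<and> P $$ (j,i) = 1)" if "i < N" for i j
    using e that by auto
  have e2: "(i < N \<and> P\<^sup>T $$ (i,j) = 1) \<longleftrightarrow> (i < N \<and> P $$ (j,i) = 1)" if "j < N" for i j
    using e that by auto
  show ?thesis using assms c unfolding is_perm_mat_def by (simp add: e e1 e2)
qed

lemma perm_TP: assumes "is_perm_mat N P" shows "P\<^sup>T * P = 1\<^sub>m N"
proof (rule eq_matI)
  have c: "P \<in> carrier_mat N N" using perm_carrier[OF assms] .
  fix i j assume ij: "i < dim_row (1\<^sub>m N)" "j < dim_col (1\<^sub>m N)"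
  then have ij': "i < N" "j < N" by auto
  obtain b where b: "b < N" "P $$ (b,i) = 1" using perm_col_ex[OF assms ij'(1)] by blast
  have "(P\<^sup>T * P) $$ (i,j) = (\<Sum>m<N. P $$ (m,j) * P $$ (m,i))"
    using mat_mult_entry[of "P\<^sup>T" N N P N i j] c ij' by (simp add: mult.commute)
  also have "\<dots> = P $$ (b,j)" using perm_col_sum[OF assms ij'(1) b] .
  also have "\<dots> = 1\<^sub>m N $$ (i,j)"
    using b ij' perm_01[OF assms b(1) ij'(2)] perm_row_unique[OF assms b(1) ij'(1) ij'(2)] by auto
  finally show "(P\<^sup>T * P) $$ (i,j) = 1\<^sub>m N $$ (i,j)" .
qed (use perm_carrier[OF assms] in auto)

lemma perm_PT: assumes "is_perm_mat N P" shows "P * P\<^sup>T = 1\<^sub>m N"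
proof (rule eq_matI)
  have c: "P \<in> carrier_mat N N" using perm_carrier[OF assms] .
  fix i j assume ij: "i < dim_row (1\<^sub>m N)" "j < dim_col (1\<^sub>m N)"
  then have ij': "i < N" "j < N" by auto
  obtain b where b: "b < N" "P $$ (i,b) = 1" using perm_row_ex[OF assms ij'(1)] by blast
  have "(P * P\<^sup>T) $$ (i,j) = (\<Sum>m<N. P $$ (i,m) * P $$ (j,m))"
    using mat_mult_entry[of P N N "P\<^sup>T" N i j] c ij' by simp
  also have "\<dots> = P $$ (j,b)" using perm_row_sum[OF assms ij'(1) b] .
  also have "\<dots> = 1\<^sub>m N $$ (i,j)"
    using b ij' perm_01[OF assms ij'(2) b(1)] perm_col_unique[OF assms b(1) ij'(1) ij'(2)] by auto
  finally show "(P * P\<^sup>T) $$ (i,j) = 1\<^sub>m N $$ (i,j)" .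
qed (use perm_carrier[OF assms] in auto)

lemma prod_entry:
  assumes "is_perm_mat N Q" "P \<in> carrier_mat N N" "Q $$ (b,j) = 1" "b < N" "j < N" "i < N"
  shows "(P * Q) $$ (i,j) = P $$ (i,b)"
  using mat_mult_entry[OF assms(2) perm_carrier[OF assms(1)] assms(6) assms(5)]
    perm_col_sum[OF assms(1) assms(5) assms(4) assms(3), of "\<lambda>m. P $$ (i,m)"] by simp

lemma perm_mult:
  assumes P: "is_perm_mat N P" and Q: "is_perm_mat N Q"
  shows "is_perm_mat N (P * Q)"
proof -
  have cP: "P \<in> carrier_mat N N" and cQ: "Q \<in> carrier_mat N N" using perm_carrier P Q by auto
  have ent: "\<exists>b<N. Q $$ (b,j) = 1 \<and> (P * Q) $$ (i,j) = P $$ (i,b)" if "i < N" "j < N" for i j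
    using perm_col_ex[OF Q that(2)] prod_entry[OF Q cP _ _ that(2) that(1)] by blast
  have 1: "\<forall>i<N. \<forall>j<N. (P*Q) $$ (i,j) = 0 \<or> (P*Q) $$ (i,j) = 1"
    using ent perm_01[OF P] by metis
  have 2: "\<exists>!j. j < N \<and> (P*Q) $$ (i,j) = 1" if i: "i < N" for i
  proof -
    obtain a where a: "a < N" "P $$ (i,a) = 1" using perm_row_ex[OF P i] by blast
    obtain j where j: "j < N" "Q $$ (a,j) = 1" using perm_row_ex[OF Q a(1)] by blast
    have "(P*Q) $$ (i,j) = 1" using prod_entry[OF Q cP j(2) a(1) j(1) i] a by simp
    moreover have "j' = j" if jj: "j' < N" "(P*Q) $$ (i,j') = 1" for j'
    proof -
      obtain b where b: "b < N" "Q $$ (b,j') = 1" "(P * Q) $$ (i,j') = P $$ (i,b)"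
        using ent[OF i jj(1)] by blast
      have "b = a" using perm_row_unique[OF P i b(1) a(1)] b jj a by simp
      then show ?thesis using perm_row_unique[OF Q a(1) jj(1) j(1)] b j by simp
    qed
    ultimately show ?thesis using j by blast
  qed
  have 3: "\<exists>!i. i < N \<and> (P*Q) $$ (i,j) = 1" if j: "j < N" for j
  proof -
    obtain b where b: "b < N" "Q $$ (b,j) = 1" using perm_col_ex[OF Q j] by blast
    have e: "(P*Q) $$ (i,j) = P $$ (i,b)" if "i < N" for i using prod_entry[OF Q cP b(2) b(1) j that] .
    obtain i where i: "i < N" "P $$ (i,b) = 1" using perm_col_ex[OF P b(1)] by blast
    show ?thesis
      apply (rule ex1I[of _ i])
      using i e apply simp
      using e perm_col_unique[OF P b(1)] i by metis
  qed
  show ?thesis unfolding is_perm_mat_def using 1 2 3 cP cQ by auto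
qed

lemma perm_one: "is_perm_mat N (1\<^sub>m N)"
  unfolding is_perm_mat_def by (auto split: if_split_asm)



definition orb :: "nat \<Rightarrow> real mat set \<Rightarrow> nat \<Rightarrow> nat set" where
  "orb N S i = {j. j < N \<and> (\<exists>P\<in>S. P $$ (j,i) = 1)}"
definition grp :: "nat \<Rightarrow> real mat set \<Rightarrow> bool" where
  "grp N S \<longleftrightarrow> (\<forall>P\<in>S. is_perm_mat N P) \<and> 1\<^sub>m N \<in> S \<and> (\<forall>P\<in>S. \<forall>Q\<in>S. P*Q \<in> S) \<and> (\<forall>P\<in>S. P\<^sup>T \<in> S)"
definition constv :: "nat \<Rightarrow> real mat set \<Rightarrow> real vec \<Rightarrow> bool" where
  "constv N S z \<longleftrightarrow> (\<forall>a<N. \<forall>b<N. b \<in> orb N S a \<longrightarrow> z $ b = z $ a)"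

lemma orb_refl: "grp N S \<Longrightarrow> i < N \<Longrightarrow> i \<in> orb N S i"
  unfolding orb_def grp_def by (intro CollectI conjI, simp, rule bexI[of _ "1\<^sub>m N"]) auto

lemma orb_sym: assumes g: "grp N S" and a: "a < N" and b: "b \<in> orb N S a" shows "a \<in> orb N S b"
proof -
  obtain P where P: "P \<in> S" "b < N" "P $$ (b,a) = 1" using b unfolding orb_def by auto
  have pm: "is_perm_mat N P" using g P unfolding grp_def by auto
  have c: "P \<in> carrier_mat N N" using perm_carrier[OF pm] .
  have "P\<^sup>T $$ (a,b) = 1" using c a P by simp
  moreover have "P\<^sup>T \<in> S" using g P unfolding grp_def by auto
  ultimately show ?thesis using a unfolding orb_def by auto
qed

lemma orb_trans: assumes g: "grp N S" and a: "a < N" and b: "b \<in> orb N S a" and c: "x \<in> orb N S b"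
  shows "x \<in> orb N S a"
proof -
  obtain P where P: "P \<in> S" "b < N" "P $$ (b,a) = 1" using b unfolding orb_def by auto
  obtain Q where Q: "Q \<in> S" "x < N" "Q $$ (x,b) = 1" using c unfolding orb_def by auto
  have pm: "is_perm_mat N P" "is_perm_mat N Q" using g P Q unfolding grp_def by auto
  have "(Q * P) $$ (x,a) = Q $$ (x,b)"
    using prod_entry[OF pm(1) perm_carrier[OF pm(2)] P(3) P(2) a Q(2)] .
  moreover have "Q * P \<in> S" using g P Q unfolding grp_def by auto
  ultimately show ?thesis using Q unfolding orb_def by auto
qed

lemma orb_eq: assumes g: "grp N S" and a: "a < N" and b: "b \<in> orb N S a" shows "orb N S a = orb N S b"
proof -
  have bN: "b < N" using b unfolding orb_def by auto
  show ?thesis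
  proof
    show "orb N S a \<subseteq> orb N S b"
      using orb_trans[OF g bN orb_sym[OF g a b]] by auto
    show "orb N S b \<subseteq> orb N S a"
      using orb_trans[OF g a b] by auto
  qed
qed

lemma cm_entry:
  assumes "v \<in> carrier_vec k" "i < N"
  shows "(cluster_mat N k c *\<^sub>v v) $ i = (\<Sum>l<k. (if i \<in> c l then 1 else 0) * v $ l)"
  using mat_vec_entry[of "cluster_mat N k c" N k v i] assms
  by (simp add: cluster_mat_def)

lemma colE_const:
  assumes g: "grp N S" and bij: "bij_betw c {..<k} (orb N S ` {..<N})"
    and y: "y \<in> col_space (cluster_mat N k c)"
  shows "constv N S y"
  unfolding constv_def
proof (intro allI impI)
  fix a b assume a: "a < N" and bN: "b < N" and b: "b \<in> orb N S a"
  obtain v where v: "v \<in> carrier_vec k" "y = cluster_mat N k c *\<^sub>v v"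
    using y unfolding col_space_def cluster_mat_def by auto
  have eqo: "orb N S a = orb N S b" using orb_eq[OF g a b] .
  have mem: "(a \<in> c l) = (b \<in> c l)" if l: "l < k" for l
  proof -
    obtain m where m: "m < N" "c l = orb N S m" using bij_betwE[OF bij] l by auto
    show ?thesis
    proof
      assume "a \<in> c l"
      then have "orb N S m = orb N S a" using orb_eq[OF g m(1)] m by simp
      then show "b \<in> c l" using m eqo orb_refl[OF g bN] by simp
    next
      assume "b \<in> c l"
      then have "orb N S m = orb N S b" using orb_eq[OF g m(1)] m by simp
      then show "a \<in> c l" using m eqo orb_refl[OF g a] by simp
    qed
  qed
  show "y $ b = y $ a"
    unfolding v(2) cm_entry[OF v(1) a] cm_entry[OF v(1) bN]
  proof (rule sum.cong)
    fix l assume "l \<in> {..<k}"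
    then have "(a \<in> c l) = (b \<in> c l)" using mem by simp
    then show "(if b \<in> c l then 1 else 0) * v $ l = (if a \<in> c l then 1 else 0) * v $ l" by simp
  qed simp
qed

lemma const_colE:
  assumes g: "grp N S" and bij: "bij_betw c {..<k} (orb N S ` {..<N})"
    and z: "z \<in> carrier_vec N" and cz: "constv N S z"
  shows "z \<in> col_space (cluster_mat N k c)"
proof -
  define rep where "rep l = (SOME m. m < N \<and> c l = orb N S m)" for l
  have rep: "rep l < N \<and> c l = orb N S (rep l)" if "l < k" for l
  proof -
    have "\<exists>m. m < N \<and> c l = orb N S m" using bij_betwE[OF bij] that by auto
    then show ?thesis unfolding rep_def by (rule someI_ex)
  qed
  define w where "w = vec k (\<lambda>l. z $ rep l)"
  have w: "w \<in> carrier_vec k" unfolding w_def by simp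
  have "z = cluster_mat N k c *\<^sub>v w"
  proof (rule eq_vecI)
    show "dim_vec z = dim_vec (cluster_mat N k c *\<^sub>v w)" using z by (simp add: cluster_mat_def)
    fix i assume "i < dim_vec (cluster_mat N k c *\<^sub>v w)"
    then have i: "i < N" by (simp add: cluster_mat_def)
    have "orb N S i \<in> c ` {..<k}" using bij_betw_imp_surj_on[OF bij] i by auto
    then obtain l0 where l0: "l0 < k" "c l0 = orb N S i" by auto
    have uniq: "l = l0" if "l < k" "i \<in> c l" for l
    proof -
      have "i \<in> orb N S (rep l)" using rep[OF that(1)] that(2) by simp
      then have "orb N S (rep l) = orb N S i" using orb_eq[OF g] rep[OF that(1)] by blast
      then have "c l = c l0" using rep[OF that(1)] l0 by simp
      then show ?thesis using bij_betw_imp_inj_on[OF bij] that(1) l0(1) by (auto dest: inj_onD)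
    qed
    have "(cluster_mat N k c *\<^sub>v w) $ i = (\<Sum>l<k. if l = l0 then z $ rep l0 else 0)"
      unfolding cm_entry[OF w i]
    proof (rule sum.cong)
      fix l assume l: "l \<in> {..<k}"
      show "(if i \<in> c l then 1 else 0) * w $ l = (if l = l0 then z $ rep l0 else 0)"
      proof (cases "l = l0")
        case True
        then have "i \<in> c l" using l0 orb_refl[OF g i] by simp
        then show ?thesis using True l0 by (simp add: w_def)
      next
        case False
        then have "i \<notin> c l" using uniq l by auto
        then show ?thesis using False by simp
      qed
    qed simp
    also have "\<dots> = z $ rep l0" using l0 by simp
    also have "\<dots> = z $ i"
    proof -
      have "i \<in> orb N S (rep l0)" using rep[OF l0(1)] l0 orb_refl[OF g i] by simp
      then show ?thesis using cz rep[OF l0(1)] i unfolding constv_def by auto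
    qed
    finally show "z $ i = (cluster_mat N k c *\<^sub>v w) $ i" by simp
  qed
  then show ?thesis unfolding col_space_def using w by (auto simp: cluster_mat_def)
qed

lemma perm_fix:
  assumes pm: "is_perm_mat N P" and PS: "P \<in> S" and z: "z \<in> carrier_vec N" and cz: "constv N S z"
  shows "P *\<^sub>v z = z"
proof (rule eq_vecI)
  have c: "P \<in> carrier_mat N N" using perm_carrier[OF pm] .
  show "dim_vec (P *\<^sub>v z) = dim_vec z" using c z by simp
  fix i assume "i < dim_vec z"
  then have i: "i < N" using z by simp
  obtain a where a: "a < N" "P $$ (i,a) = 1" using perm_row_ex[OF pm i] by blast
  have "(P *\<^sub>v z) $ i = z $ a"
    using mat_vec_entry[OF c z i] perm_row_sum[OF pm i a, of "\<lambda>m. z $ m"] by simp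
  also have "\<dots> = z $ i"
  proof -
    have "i \<in> orb N S a" using a i PS unfolding orb_def by auto
    then show ?thesis using cz a i unfolding constv_def by auto
  qed
  finally show "(P *\<^sub>v z) $ i = z $ i" .
qed

lemma const_X:
  assumes S: "\<forall>P\<in>S. is_perm_mat N P \<and> P * X = X * P" and X: "X \<in> carrier_mat N N"
    and z: "z \<in> carrier_vec N" and cz: "constv N S z"
  shows "constv N S (X *\<^sub>v z)"
  unfolding constv_def
proof (intro allI impI)
  fix a b assume a: "a < N" and bN: "b < N" and b: "b \<in> orb N S a"
  obtain P where P: "P \<in> S" "P $$ (b,a) = 1" using b unfolding orb_def by auto
  have pm: "is_perm_mat N P" and com: "P * X = X * P" using S P by auto
  have c: "P \<in> carrier_mat N N" using perm_carrier[OF pm] .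
  have Xz: "X *\<^sub>v z \<in> carrier_vec N" using X z by simp
  have "(P *\<^sub>v (X *\<^sub>v z)) $ b = (X *\<^sub>v z) $ a"
    using mat_vec_entry[OF c Xz bN] perm_row_sum[OF pm bN a P(2), of "\<lambda>m. (X *\<^sub>v z) $ m"] by simp
  moreover have "P *\<^sub>v (X *\<^sub>v z) = X *\<^sub>v z"
  proof -
    have "P *\<^sub>v (X *\<^sub>v z) = (P * X) *\<^sub>v z" using c X z by simp
    also have "\<dots> = (X * P) *\<^sub>v z" using com by simp
    also have "\<dots> = X *\<^sub>v (P *\<^sub>v z)" using c X z by simp
    also have "\<dots> = X *\<^sub>v z" using perm_fix[OF pm P(1) z cz] by simp
    finally show ?thesis .
  qed
  ultimately show "(X *\<^sub>v z) $ b = (X *\<^sub>v z) $ a" by simp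
qed

lemma grp_perm: "grp N S \<Longrightarrow> P \<in> S \<Longrightarrow> is_perm_mat N P"
  unfolding grp_def by blast

lemma col_inv:
  assumes g: "grp N S" and bij: "bij_betw c {..<k} (orb N S ` {..<N})"
    and com: "\<forall>P\<in>S. P * X = X * P" and X: "X \<in> carrier_mat N N"
    and v: "v \<in> col_space (cluster_mat N k c)"
  shows "X *\<^sub>v v \<in> col_space (cluster_mat N k c)"
proof -
  obtain cc where "v = cluster_mat N k c *\<^sub>v cc" using v unfolding col_space_def by blast
  then have vc: "v \<in> carrier_vec N" by (intro carrier_vecI) (simp add: cluster_mat_def)
  have S: "\<forall>P\<in>S. is_perm_mat N P \<and> P * X = X * P" using grp_perm[OF g] com by blast
  have cv: "constv N S v" by (rule colE_const[OF g bij v])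
  have cx: "constv N S (X *\<^sub>v v)" by (rule const_X[OF S X vc cv])
  have xc: "X *\<^sub>v v \<in> carrier_vec N" by (rule mult_mat_vec_carrier[OF X vc])
  show ?thesis by (rule const_colE[OF g bij xc cx])
qed



lemma assocN: "A \<in> carrier_mat N N \<Longrightarrow> B \<in> carrier_mat N N \<Longrightarrow> C \<in> carrier_mat N N \<Longrightarrow> A * B * C = A * (B * C)"
  by (rule assoc_mult_mat)

lemma transp_comm:
  assumes P: "is_perm_mat N P" and Q: "is_perm_mat N Q" and Y: "Y \<in> carrier_mat N N" and com: "Q * Y = Y * P"
  shows "Q\<^sup>T * Y = Y * P\<^sup>T"
proof -
  have cP: "P \<in> carrier_mat N N" and cQ: "Q \<in> carrier_mat N N" using perm_carrier P Q by auto
  have cPt: "P\<^sup>T \<in> carrier_mat N N" and cQt: "Q\<^sup>T \<in> carrier_mat N N" using cP cQ by auto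
  have "Q\<^sup>T * Y = (Q\<^sup>T * Y) * 1\<^sub>m N" using cQt Y by simp
  also have "\<dots> = (Q\<^sup>T * Y) * (P * P\<^sup>T)" using perm_PT[OF P] by simp
  also have "\<dots> = ((Q\<^sup>T * Y) * P) * P\<^sup>T"
    by (rule assocN[symmetric]) (use cQt Y cP cPt in auto)
  also have "\<dots> = (Q\<^sup>T * (Y * P)) * P\<^sup>T" using assocN[OF cQt Y cP] by simp
  also have "\<dots> = (Q\<^sup>T * (Q * Y)) * P\<^sup>T" using com by simp
  also have "\<dots> = ((Q\<^sup>T * Q) * Y) * P\<^sup>T" using assocN[OF cQt cQ Y] by simp
  also have "\<dots> = Y * P\<^sup>T" using perm_TP[OF Q] Y by simp
  finally show ?thesis .
qed

lemma comm_mult: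
  assumes "P1 \<in> carrier_mat N N" "P2 \<in> carrier_mat N N" "Q1 \<in> carrier_mat N N" "Q2 \<in> carrier_mat N N"
    "Y \<in> carrier_mat N N" "Q1 * Y = Y * P1" "Q2 * Y = Y * P2"
  shows "(Q1 * Q2) * Y = Y * (P1 * P2)"
proof -
  have "(Q1 * Q2) * Y = Q1 * (Q2 * Y)" using assocN[of Q1 N Q2 Y] assms by simp
  also have "\<dots> = Q1 * (Y * P2)" using assms by simp
  also have "\<dots> = (Q1 * Y) * P2" using assocN[of Q1 N Y P2] assms by simp
  also have "\<dots> = (Y * P1) * P2" using assms by simp
  also have "\<dots> = Y * (P1 * P2)" using assocN[of Y N P1 P2] assms by simp
  finally show ?thesis .
qed

lemma XT_comm:
  assumes g: "grp N S" and com: "\<forall>P\<in>S. P * X = X * P" and X: "X \<in> carrier_mat N N"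
  shows "\<forall>P\<in>S. P * X\<^sup>T = X\<^sup>T * P"
proof
  fix P assume PS: "P \<in> S"
  have cP: "P \<in> carrier_mat N N" using perm_carrier[OF grp_perm[OF g PS]] .
  have "P\<^sup>T \<in> S" using g PS unfolding grp_def by blast
  then have e: "P\<^sup>T * X = X * P\<^sup>T" using com by blast
  have "(P\<^sup>T * X)\<^sup>T = X\<^sup>T * P" using transpose_mult[of "P\<^sup>T" N N X N] cP X by simp
  moreover have "(X * P\<^sup>T)\<^sup>T = P * X\<^sup>T" using transpose_mult[of X N N "P\<^sup>T" N] cP X by simp
  ultimately show "P * X\<^sup>T = X\<^sup>T * P" using e by simp
qed

lemma first_in:
  assumes T: "T \<in> carrier_mat N N" and i: "i < k" and kN: "k \<le> N"
  shows "col T i \<in> col_space (cols_first k T)"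
proof -
  have cf: "cols_first k T \<in> carrier_mat N k" using T unfolding cols_first_def by simp
  have "cols_first k T *\<^sub>v unit_vec k i = col T i"
  proof (rule eq_vecI)
    show "dim_vec (cols_first k T *\<^sub>v unit_vec k i) = dim_vec (col T i)" using cf T by simp
    fix r assume "r < dim_vec (col T i)"
    then have r: "r < N" using T by simp
    have "(cols_first k T *\<^sub>v unit_vec k i) $ r = (\<Sum>l<k. T $$ (r,l) * (if l = i then 1 else 0))"
      using mat_vec_entry[OF cf _ r, of "unit_vec k i"] T r i
      by (simp add: cols_first_def)
    also have "\<dots> = T $$ (r,i)" using i by (simp add: if_distrib cong: if_cong)
    also have "\<dots> = col T i $ r" using T r i kN by simp
    finally show "(cols_first k T *\<^sub>v unit_vec k i) $ r = col T i $ r" .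
  qed
  then show ?thesis unfolding col_space_def using cf by (auto intro!: exI[of _ "unit_vec k i"])
qed

lemma orth0:
  assumes T: "T \<in> carrier_mat N N" and TT: "T\<^sup>T * T = 1\<^sub>m N" and kj: "k \<le> j" and j: "j < N"
    and w: "w \<in> carrier_vec k" and kN: "k \<le> N"
  shows "(\<Sum>r<N. T $$ (r,j) * (cols_first k T *\<^sub>v w) $ r) = 0"
proof -
  have cf: "cols_first k T \<in> carrier_mat N k" using T unfolding cols_first_def by simp
  have e: "(cols_first k T *\<^sub>v w) $ r = (\<Sum>l<k. T $$ (r,l) * w $ l)" if "r < N" for r
  proof -
    have "(cols_first k T *\<^sub>v w) $ r = (\<Sum>l<k. cols_first k T $$ (r,l) * w $ l)"
      by (rule mat_vec_entry[OF cf w that])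
    also have "\<dots> = (\<Sum>l<k. T $$ (r,l) * w $ l)"
      by (rule sum.cong) (use T that in \<open>auto simp: cols_first_def\<close>)
    finally show ?thesis .
  qed
  have o: "(\<Sum>r<N. T $$ (r,j) * T $$ (r,l)) = 0" if "l < k" for l
  proof -
    have "(\<Sum>r<N. T $$ (r,j) * T $$ (r,l)) = (T\<^sup>T * T) $$ (j,l)"
      using mat_mult_entry[of "T\<^sup>T" N N T N j l] T j that kN by simp
    also have "\<dots> = 0" using TT j that kj kN by simp
    finally show ?thesis .
  qed
  have "(\<Sum>r<N. T $$ (r,j) * (cols_first k T *\<^sub>v w) $ r) = (\<Sum>r<N. \<Sum>l<k. T $$ (r,j) * T $$ (r,l) * w $ l)"
    using e by (simp add: sum_distrib_left mult.assoc)
  also have "\<dots> = (\<Sum>l<k. \<Sum>r<N. T $$ (r,j) * T $$ (r,l) * w $ l)" by (rule sum.swap)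
  also have "\<dots> = (\<Sum>l<k. (\<Sum>r<N. T $$ (r,j) * T $$ (r,l)) * w $ l)" by (simp add: sum_distrib_right)
  also have "\<dots> = 0" using o by simp
  finally show ?thesis .
qed

lemma zero_block:
  assumes T: "T \<in> carrier_mat N N" and TT: "T\<^sup>T * T = 1\<^sub>m N" and kN: "k \<le> N"
    and X: "X \<in> carrier_mat N N"
    and inv: "\<forall>v \<in> col_space (cols_first k T). X *\<^sub>v v \<in> col_space (cols_first k T)"
    and i: "i < k" and kj: "k \<le> j" and j: "j < N"
  shows "(T\<^sup>T * X * T) $$ (j,i) = 0"
proof -
  have iN: "i < N" using i kN by simp
  have "X *\<^sub>v col T i \<in> col_space (cols_first k T)" using inv first_in[OF T i kN] by blast
  then obtain w where w: "w \<in> carrier_vec k" "X *\<^sub>v col T i = cols_first k T *\<^sub>v w"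
    unfolding col_space_def cols_first_def by auto
  have ct: "col T i \<in> carrier_vec N" by (intro carrier_vecI) (use T in simp)
  have xt: "(X * T) $$ (r,i) = (X *\<^sub>v col T i) $ r" if "r < N" for r
    using mat_mult_entry[OF X T that iN] mat_vec_entry[OF X ct that] T iN by simp
  have "T\<^sup>T * X * T = T\<^sup>T * (X * T)" using assocN[of "T\<^sup>T" N X T] T X by simp
  then have "(T\<^sup>T * X * T) $$ (j,i) = (\<Sum>r<N. T\<^sup>T $$ (j,r) * (X * T) $$ (r,i))"
    using mat_mult_entry[of "T\<^sup>T" N N "X * T" N j i] T X j iN by simp
  also have "\<dots> = (\<Sum>r<N. T $$ (r,j) * (cols_first k T *\<^sub>v w) $ r)"
    by (rule sum.cong) (use T j xt w in auto)
  also have "\<dots> = 0" by (rule orth0[OF T TT kj j w(1) kN])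
  finally show ?thesis .
qed

lemma block:
  assumes B: "B \<in> carrier_mat N N" and kN: "k \<le> N"
    and z: "\<And>i j. i < k \<Longrightarrow> k \<le> j \<Longrightarrow> j < N \<Longrightarrow> B $$ (j,i) = 0 \<and> B $$ (i,j) = 0"
  shows "block_diag_split N k B"
  unfolding block_diag_split_def
proof (intro exI conjI)
  let ?B1 = "mat k k (\<lambda>(i,j). B $$ (i,j))"
  let ?B2 = "mat (N-k) (N-k) (\<lambda>(i,j). B $$ (i+k,j+k))"
  show "?B1 \<in> carrier_mat k k" "?B2 \<in> carrier_mat (N-k) (N-k)" by auto
  show "B = four_block_mat ?B1 (0\<^sub>m k (N-k)) (0\<^sub>m (N-k) k) ?B2"
  proof (rule eq_matI)
    fix i j assume "i < dim_row (four_block_mat ?B1 (0\<^sub>m k (N-k)) (0\<^sub>m (N-k) k) ?B2)"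
      "j < dim_col (four_block_mat ?B1 (0\<^sub>m k (N-k)) (0\<^sub>m (N-k) k) ?B2)"
    then have i: "i < N" and j: "j < N" using kN by auto
    show "B $$ (i,j) = four_block_mat ?B1 (0\<^sub>m k (N-k)) (0\<^sub>m (N-k) k) ?B2 $$ (i,j)"
      using i j kN z[of i j] z[of j i] by auto
  qed (use B kN in auto)
qed

lemma generic:
  assumes g: "grp N S" and com: "\<forall>P\<in>S. P * X = X * P" and X: "X \<in> carrier_mat N N"
    and bij: "bij_betw c {..<k} (orb N S ` {..<N})"
    and T: "T \<in> carrier_mat N N" and TT: "T\<^sup>T * T = 1\<^sub>m N"
    and cs: "col_space (cols_first k T) = col_space (cluster_mat N k c)"
  shows "block_diag_split N k (T\<^sup>T * X * T)"
proof -
  have "k = card (orb N S ` {..<N})" using bij_betw_same_card[OF bij] by simp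
  also have "\<dots> \<le> N" using card_image_le[of "{..<N}" "orb N S"] by simp
  finally have kN: "k \<le> N" .
  have XT: "X\<^sup>T \<in> carrier_mat N N" using X by simp
  have inv1: "\<forall>v \<in> col_space (cols_first k T). X *\<^sub>v v \<in> col_space (cols_first k T)"
    unfolding cs using col_inv[OF g bij com X] by blast
  have inv2: "\<forall>v \<in> col_space (cols_first k T). X\<^sup>T *\<^sub>v v \<in> col_space (cols_first k T)"
    unfolding cs using col_inv[OF g bij XT_comm[OF g com X] XT] by blast
  have tr: "(T\<^sup>T * X * T)\<^sup>T = T\<^sup>T * X\<^sup>T * T"
  proof -
    have "(T\<^sup>T * X * T)\<^sup>T = T\<^sup>T * (T\<^sup>T * X)\<^sup>T" using transpose_mult[of "T\<^sup>T * X" N N T N] T X by simp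
    also have "\<dots> = T\<^sup>T * (X\<^sup>T * T)" using transpose_mult[of "T\<^sup>T" N N X N] T X by simp
    also have "\<dots> = T\<^sup>T * X\<^sup>T * T" using assocN[of "T\<^sup>T" N "X\<^sup>T" T] T X by simp
    finally show ?thesis .
  qed
  have cB: "T\<^sup>T * X * T \<in> carrier_mat N N" using T X by simp
  show ?thesis
  proof (rule block[OF cB kN])
    fix i j assume ij: "i < k" "k \<le> j" "j < N"
    have iN: "i < N" using ij kN by simp
    have 1: "(T\<^sup>T * X * T) $$ (j,i) = 0" by (rule zero_block[OF T TT kN X inv1 ij])
    have d: "dim_row (T\<^sup>T * X * T) = N" "dim_col (T\<^sup>T * X * T) = N" using T X by simp_all
    have "(T\<^sup>T * X * T) $$ (i,j) = (T\<^sup>T * X * T)\<^sup>T $$ (j,i)"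
      using d iN ij by simp
    also have "\<dots> = (T\<^sup>T * X\<^sup>T * T) $$ (j,i)" using tr by simp
    finally have "(T\<^sup>T * X * T) $$ (i,j) = (T\<^sup>T * X\<^sup>T * T) $$ (j,i)" .
    also have "\<dots> = 0" by (rule zero_block[OF T TT kN XT inv2 ij])
    finally show "(T\<^sup>T * X * T) $$ (j,i) = 0 \<and> (T\<^sup>T * X * T) $$ (i,j) = 0" using 1 by simp
  qed
qed



lemma G_grp:
  assumes A: "A \<in> carrier_mat N N" and L: "L \<in> carrier_mat N N" and K: "K \<in> carrier_mat N N"
  shows "grp N (fst ` sym_group N A L K)" "grp N (snd ` sym_group N A L K)"
proof -
  let ?G = "sym_group N A L K"
  have one: "(1\<^sub>m N, 1\<^sub>m N) \<in> ?G" using A L K perm_one unfolding sym_group_def by auto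
  have mul: "(P1 * P2, Q1 * Q2) \<in> ?G" if "(P1,Q1) \<in> ?G" "(P2,Q2) \<in> ?G" for P1 P2 Q1 Q2
  proof -
    have h: "is_perm_mat N P1" "P1 * A = A * P1" "is_perm_mat N Q1" "Q1 * L = L * Q1" "Q1 * K = K * P1"
         "is_perm_mat N P2" "P2 * A = A * P2" "is_perm_mat N Q2" "Q2 * L = L * Q2" "Q2 * K = K * P2"
      using that unfolding sym_group_def by auto
    have c: "P1 \<in> carrier_mat N N" "P2 \<in> carrier_mat N N" "Q1 \<in> carrier_mat N N" "Q2 \<in> carrier_mat N N"
      using perm_carrier h by auto
    show ?thesis unfolding sym_group_def
      using perm_mult[OF h(1) h(6)] perm_mult[OF h(3) h(8)]
        comm_mult[OF c(1) c(2) c(1) c(2) A h(2) h(7)]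
        comm_mult[OF c(3) c(4) c(3) c(4) L h(4) h(9)]
        comm_mult[OF c(1) c(2) c(3) c(4) K h(5) h(10)] by simp
  qed
  have tr: "(P\<^sup>T, Q\<^sup>T) \<in> ?G" if "(P,Q) \<in> ?G" for P Q
  proof -
    have h: "is_perm_mat N P" "P * A = A * P" "is_perm_mat N Q" "Q * L = L * Q" "Q * K = K * P"
      using that unfolding sym_group_def by auto
    show ?thesis unfolding sym_group_def
      using perm_transpose[OF h(1)] perm_transpose[OF h(3)]
        transp_comm[OF h(1) h(1) A h(2)] transp_comm[OF h(3) h(3) L h(4)] transp_comm[OF h(1) h(3) K h(5)]
      by simp
  qed
  have pm: "is_perm_mat N P \<and> is_perm_mat N Q" if "(P,Q) \<in> ?G" for P Q
    using that unfolding sym_group_def by auto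
  show "grp N (fst ` ?G)" unfolding grp_def
  proof (intro conjI ballI)
    show "1\<^sub>m N \<in> fst ` ?G" using one by force
  next
    fix P assume "P \<in> fst ` ?G" then show "is_perm_mat N P" using pm by force
  next
    fix P Q assume "P \<in> fst ` ?G" "Q \<in> fst ` ?G" then show "P * Q \<in> fst ` ?G" using mul by force
  next
    fix P assume "P \<in> fst ` ?G" then show "P\<^sup>T \<in> fst ` ?G" using tr by force
  qed
  show "grp N (snd ` ?G)" unfolding grp_def
  proof (intro conjI ballI)
    show "1\<^sub>m N \<in> snd ` ?G" using one by force
  next
    fix P assume "P \<in> snd ` ?G" then show "is_perm_mat N P" using pm by force
  next
    fix P Q assume "P \<in> snd ` ?G" "Q \<in> snd ` ?G" then show "P * Q \<in> snd ` ?G" using mul by force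
  next
    fix P assume "P \<in> snd ` ?G" then show "P\<^sup>T \<in> snd ` ?G" using tr by force
  qed
qed

lemma orbit_top_eq: "orbit_top N G = orb N (fst ` G)"
  unfolding orbit_top_def orb_def by (rule ext) force

lemma orbit_bot_eq: "orbit_bot N G = orb N (snd ` G)"
  unfolding orbit_bot_def orb_def by (rule ext) force

theorem proposition2:
  fixes N kT kB :: nat and A L W :: "real mat" and \<kappa> :: "nat \<Rightarrow> real"
    and cT cB :: "nat \<Rightarrow> nat set" and TT TB :: "real mat"
  assumes "N \<ge> 1"
    and "A \<in> carrier_mat N N" and "A\<^sup>T = A"
    and "\<forall>i<N. \<forall>j<N. A $$ (i,j) = 0 \<or> A $$ (i,j) = 1"
    and "W \<in> carrier_mat N N" and "W\<^sup>T = W" and "\<forall>i<N. \<forall>j<N. W $$ (i,j) \<ge> 0"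
    and "L = laplacian N W"
    and "\<forall>i<N. \<kappa> i = 0 \<or> \<kappa> i = 1"
    and "bij_betw cT {..<kT} (clusters_top N (sym_group N A L (diag_K N \<kappa>)))"
    and "bij_betw cB {..<kB} (clusters_bot N (sym_group N A L (diag_K N \<kappa>)))"
    and "ordered_eigenbasis N kT (cluster_mat N kT cT) (proj_mat (cluster_mat N kT cT)) TT"
    and "ordered_eigenbasis N kB (cluster_mat N kB cB) (proj_mat (cluster_mat N kB cB)) TB"
  shows "block_diag_split N kT (TT\<^sup>T * A * TT) \<and> block_diag_split N kB (TB\<^sup>T * L * TB)"
proof -
  let ?G = "sym_group N A L (diag_K N \<kappa>)"
  have A: "A \<in> carrier_mat N N" using assms(2) .
  have L: "L \<in> carrier_mat N N" using assms(8) unfolding laplacian_def by simp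
  have K: "diag_K N \<kappa> \<in> carrier_mat N N" unfolding diag_K_def by simp
  have gT: "grp N (fst ` ?G)" and gB: "grp N (snd ` ?G)" using G_grp[OF A L K] by auto
  have comT: "\<forall>P\<in>fst ` ?G. P * A = A * P" unfolding sym_group_def by auto
  have comB: "\<forall>P\<in>snd ` ?G. P * L = L * P" unfolding sym_group_def by auto
  have bT: "bij_betw cT {..<kT} (orb N (fst ` ?G) ` {..<N})"
    using assms(10) unfolding clusters_top_def orbit_top_eq .
  have bB: "bij_betw cB {..<kB} (orb N (snd ` ?G) ` {..<N})"
    using assms(11) unfolding clusters_bot_def orbit_bot_eq .
  have eT: "TT \<in> carrier_mat N N" "TT\<^sup>T * TT = 1\<^sub>m N" "col_space (cols_first kT TT) = col_space (cluster_mat N kT cT)"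
    using assms(12) unfolding ordered_eigenbasis_def by auto
  have eB: "TB \<in> carrier_mat N N" "TB\<^sup>T * TB = 1\<^sub>m N" "col_space (cols_first kB TB) = col_space (cluster_mat N kB cB)"
    using assms(13) unfolding ordered_eigenbasis_def by auto
  show ?thesis
    using generic[OF gT comT A bT eT] generic[OF gB comB L bB eB] by simp
qed


end
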